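(* Let $k=(k_s)_{s\geq1}$ be a sequence of nonnegative integers and $l=(l_s)$, $m=(m_s)$ sequences with values in $\mathbb{Z}_{\geq2}\cup\{\infty\}$ and $\mathbb{Z}_{\geq1}\cup\{\infty\}$ respectively, such that $2k_s<m_s$ for all $s$. Let $\Delta=\Delta(k,l,m)$ be the subgroup of $\prod_s \mathbb{Z}/m_s\mathbb{Z}\wr D_{l_s}$ generated (and marked) by the three sequences $\tau=(\tau_s)$, $\alpha=(\alpha_s)$, $\beta=(\beta_s)$, where $\tau_s=(+1,\mathbb{1})$, $\alpha_s=(0,a_s\delta_0)$, $\beta_s=(0,b_s\delta_{k_s})$. If $R<\frac{\min_s k_s-1}{2}$, then the marked balls of radius $R$ in $\Delta$ and in $\Gamma(0,2,\infty)$ coincide. Moreover, if the sequence $k$ is unbounded, then $\Gamma(0,2,\infty)$ is a marked quotient of $\Delta$.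
   Context: $D_l=\langle a,b\mid a^2=b^2=(ab)^l=1\rangle$ is the dihedral group of order $2l$ ($D_\infty$ infinite dihedral); $a_s,b_s$ denote these generators in $D_{l_s}$. The wreath product $B\wr L$ has elements $(g,f)$, $g\in B$, $f:B\to L$ finitely supported, with $B$ acting by shift; $\mathbb{1}$ is the trivial function and $c\,\delta_g$ the function equal to $c$ at $g$, trivial elsewhere; $\mathbb{Z}/\infty\mathbb{Z}=\mathbb{Z}$. $\Gamma(0,2,\infty)$ is $\mathbb{Z}\wr D_2$ marked by $(+1,\mathbb{1}),(0,a\delta_0),(0,b\delta_0)$. Marked balls of radius $R$ in two groups marked by ordered triples coincide if a word of length at most $2R$ in the free group on three letters is trivial in one iff it is trivial in the other. A marked group $G$ is a marked quotient of $H$ if the map sending the $i$-th marked generator of $H$ to that of $G$ extends to a surjective homomorphism. *)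

theory Defs
  imports "HOL-Algebra.Algebra" "HOL-Library.Extended_Nat"
begin

text \<open>Z/infinity Z = Z. We encode m :: enat; integer_mod_group 0 is the integers.\<close>

definition zmod_index :: "enat \<Rightarrow> nat" where
  "zmod_index m = (case m of enat n \<Rightarrow> n | \<infinity> \<Rightarrow> 0)"

definition Zmod :: "enat \<Rightarrow> int monoid" where
  "Zmod m = integer_mod_group (zmod_index m)"

text \<open>Class of an integer in Z/mZ (normal form); for m = infinity it is the integer itself.\<close>
definition zcls :: "enat \<Rightarrow> int \<Rightarrow> int" where
  "zcls m x = x mod int (zmod_index m)"

text \<open>Standard model: (i,e) stands for r^i s^e with r = ab (of order l) and s = a;
  the rotation exponent i is taken in Z/lZ (Z if l is infinite).\<close>

definition dihedral :: "enat \<Rightarrow> (int \<times> bool) monoid" where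
  "dihedral l = \<lparr>carrier = {(i, e). i \<in> carrier (Zmod l)},
     monoid.mult = (\<lambda>(i, e) (j, f). (zcls l (i + (if e then - j else j)), e \<noteq> f)),
     one = (0, False)\<rparr>"

definition dih_a :: "enat \<Rightarrow> int \<times> bool" where
  "dih_a l = (0, True)"

definition dih_b :: "enat \<Rightarrow> int \<times> bool" where
  "dih_b l = (zcls l (-1), True)"

definition wreath :: "('b, 'x) monoid_scheme \<Rightarrow> ('c, 'y) monoid_scheme \<Rightarrow> ('b \<times> ('b \<Rightarrow> 'c)) monoid" where
  "wreath B L = \<lparr>carrier = {(g, f). g \<in> carrier B \<and> f \<in> extensional (carrier B)
        \<and> f \<in> carrier B \<rightarrow> carrier L \<and> finite {x \<in> carrier B. f x \<noteq> \<one>\<^bsub>L\<^esub>}},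
     monoid.mult = (\<lambda>(g, f) (h, f'). (g \<otimes>\<^bsub>B\<^esub> h,
        (\<lambda>x\<in>carrier B. f x \<otimes>\<^bsub>L\<^esub> f' (inv\<^bsub>B\<^esub> g \<otimes>\<^bsub>B\<^esub> x)))),
     one = (\<one>\<^bsub>B\<^esub>, (\<lambda>x\<in>carrier B. \<one>\<^bsub>L\<^esub>))\<rparr>"

definition triv_fun :: "('b, 'x) monoid_scheme \<Rightarrow> ('c, 'y) monoid_scheme \<Rightarrow> 'b \<Rightarrow> 'c" where
  "triv_fun B L = (\<lambda>x\<in>carrier B. \<one>\<^bsub>L\<^esub>)"

definition delta_fun :: "('b, 'x) monoid_scheme \<Rightarrow> ('c, 'y) monoid_scheme \<Rightarrow> 'c \<Rightarrow> 'b \<Rightarrow> 'b \<Rightarrow> 'c" where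
  "delta_fun B L c g = (\<lambda>x\<in>carrier B. if x = g then c else \<one>\<^bsub>L\<^esub>)"

datatype letter = X1 | X2 | X3

text \<open>Words in the free group on three letters: lists of letters with an exponent sign
  (True = inverse letter).\<close>
type_synonym word3 = "(letter \<times> bool) list"

fun eval_word :: "('a, 'b) monoid_scheme \<Rightarrow> (letter \<Rightarrow> 'a) \<Rightarrow> word3 \<Rightarrow> 'a" where
  "eval_word G gen [] = \<one>\<^bsub>G\<^esub>"
| "eval_word G gen ((x, e) # w) =
     (if e then inv\<^bsub>G\<^esub> (gen x) else gen x) \<otimes>\<^bsub>G\<^esub> eval_word G gen w"

definition marked3 :: "'a \<Rightarrow> 'a \<Rightarrow> 'a \<Rightarrow> letter \<Rightarrow> 'a" where
  "marked3 x y z = (\<lambda>v. case v of X1 \<Rightarrow> x | X2 \<Rightarrow> y | X3 \<Rightarrow> z)"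

text \<open>Marked balls of radius R coincide: a word of length at most 2R is trivial in
  one marked group iff it is trivial in the other.\<close>
definition balls_coincide ::
  "real \<Rightarrow> ('a, 'b) monoid_scheme \<Rightarrow> (letter \<Rightarrow> 'a) \<Rightarrow> ('c, 'd) monoid_scheme \<Rightarrow> (letter \<Rightarrow> 'c) \<Rightarrow> bool" where
  "balls_coincide R G gG H gH \<longleftrightarrow>
     (\<forall>w :: word3. real (length w) \<le> 2 * R \<longrightarrow>
        (eval_word G gG w = \<one>\<^bsub>G\<^esub> \<longleftrightarrow> eval_word H gH w = \<one>\<^bsub>H\<^esub>))"

definition marked_quotient ::
  "('a, 'b) monoid_scheme \<Rightarrow> (letter \<Rightarrow> 'a) \<Rightarrow> ('c, 'd) monoid_scheme \<Rightarrow> (letter \<Rightarrow> 'c) \<Rightarrow> bool" where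
  "marked_quotient G gG H gH \<longleftrightarrow>
     (\<exists>h. h \<in> hom H G \<and> (\<forall>v. h (gH v) = gG v) \<and> h ` carrier H = carrier G)"

definition Gamma_0_2_inf :: "(int \<times> (int \<Rightarrow> int \<times> bool)) monoid" where
  "Gamma_0_2_inf = wreath (Zmod \<infinity>) (dihedral 2)"

definition Gamma_gens :: "letter \<Rightarrow> int \<times> (int \<Rightarrow> int \<times> bool)" where
  "Gamma_gens = marked3
     (1, triv_fun (Zmod \<infinity>) (dihedral 2))
     (0, delta_fun (Zmod \<infinity>) (dihedral 2) (dih_a 2) 0)
     (0, delta_fun (Zmod \<infinity>) (dihedral 2) (dih_b 2) 0)"

definition Prod_group :: "(nat \<Rightarrow> enat) \<Rightarrow> (nat \<Rightarrow> enat)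
    \<Rightarrow> (nat \<Rightarrow> int \<times> (int \<Rightarrow> int \<times> bool)) monoid" where
  "Prod_group l m = product_group {1..} (\<lambda>s. wreath (Zmod (m s)) (dihedral (l s)))"

definition Delta_tau :: "(nat \<Rightarrow> enat) \<Rightarrow> (nat \<Rightarrow> enat) \<Rightarrow> nat \<Rightarrow> int \<times> (int \<Rightarrow> int \<times> bool)" where
  "Delta_tau l m = (\<lambda>s\<in>{1..}. (zcls (m s) 1, triv_fun (Zmod (m s)) (dihedral (l s))))"

definition Delta_alpha :: "(nat \<Rightarrow> enat) \<Rightarrow> (nat \<Rightarrow> enat) \<Rightarrow> nat \<Rightarrow> int \<times> (int \<Rightarrow> int \<times> bool)" where
  "Delta_alpha l m = (\<lambda>s\<in>{1..}. (0, delta_fun (Zmod (m s)) (dihedral (l s)) (dih_a (l s)) 0))"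

definition Delta_beta :: "(nat \<Rightarrow> nat) \<Rightarrow> (nat \<Rightarrow> enat) \<Rightarrow> (nat \<Rightarrow> enat) \<Rightarrow> nat \<Rightarrow> int \<times> (int \<Rightarrow> int \<times> bool)" where
  "Delta_beta k l m = (\<lambda>s\<in>{1..}. (0, delta_fun (Zmod (m s)) (dihedral (l s)) (dih_b (l s))
                                       (zcls (m s) (int (k s)))))"

definition Delta_gens :: "(nat \<Rightarrow> nat) \<Rightarrow> (nat \<Rightarrow> enat) \<Rightarrow> (nat \<Rightarrow> enat) \<Rightarrow> letter \<Rightarrow> nat \<Rightarrow> int \<times> (int \<Rightarrow> int \<times> bool)" where
  "Delta_gens k l m = marked3 (Delta_tau l m) (Delta_alpha l m) (Delta_beta k l m)"

definition Delta :: "(nat \<Rightarrow> nat) \<Rightarrow> (nat \<Rightarrow> enat) \<Rightarrow> (nat \<Rightarrow> enat) \<Rightarrow> (nat \<Rightarrow> int \<times> (int \<Rightarrow> int \<times> bool)) monoid" where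
  "Delta k l m = subgroup_generated (Prod_group l m) (range (Delta_gens k l m))"

end

theory Submission
  imports Defs
begin

lemma zcls_carrier: "zcls l x \<in> carrier (Zmod l)"
  by (auto simp: zcls_def Zmod_def carrier_integer_mod_group)

lemma carrier_Zmod_iff: "i \<in> carrier (Zmod l) \<longleftrightarrow> zcls l i = i"
proof (cases "zmod_index l = 0")
  case False
  then have p: "int (zmod_index l) > 0" by simp
  show ?thesis
  proof
    assume "i \<in> carrier (Zmod l)" then show "zcls l i = i"
      using False by (simp add: zcls_def Zmod_def carrier_integer_mod_group)
  next
    assume "zcls l i = i"
    then have "i = i mod int (zmod_index l)" by (simp add: zcls_def)
    then have "0 \<le> i \<and> i < int (zmod_index l)" using pos_mod_sign[OF p, of i] pos_mod_bound[OF p, of i] by linarith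
    then show "i \<in> carrier (Zmod l)" using False by (simp add: Zmod_def carrier_integer_mod_group)
  qed
qed (simp add: zcls_def Zmod_def carrier_integer_mod_group)

lemma zcls_idem[simp]: "zcls l (zcls l x) = zcls l x"
  by (simp add: zcls_def)

lemma zcls_add_left: "zcls l (zcls l x + y) = zcls l (x + y)"
  by (simp add: zcls_def mod_add_left_eq)
lemma zcls_add_right: "zcls l (x + zcls l y) = zcls l (x + y)"
  by (simp add: zcls_def mod_add_right_eq)
lemma zcls_minus_right: "zcls l (x - zcls l y) = zcls l (x - y)"
  by (simp add: zcls_def mod_diff_right_eq)
lemma zcls_0[simp]: "zcls l 0 = 0" by (simp add: zcls_def)
lemma zcls_negadd_right: "zcls l (x + - zcls l y) = zcls l (x - y)"
  by (simp add: zcls_def mod_diff_right_eq)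
lemma zcls_uminus: "zcls l (- zcls l y) = zcls l (- y)"
  by (simp add: zcls_def mod_minus_eq)

lemma carrier_dihedral: "carrier (dihedral l) = {(i, e). zcls l i = i}"
  by (auto simp: dihedral_def carrier_Zmod_iff)

lemma mult_dihedral: "(i, e) \<otimes>\<^bsub>dihedral l\<^esub> (j, f) = (zcls l (i + (if e then - j else j)), e \<noteq> f)"
  by (simp add: dihedral_def)

lemma one_dihedral: "\<one>\<^bsub>dihedral l\<^esub> = (0, False)"
  by (simp add: dihedral_def)

lemma group_dihedral: "group (dihedral l)"
proof (rule groupI)
  fix x y assume "x \<in> carrier (dihedral l)" "y \<in> carrier (dihedral l)"
  then show "x \<otimes>\<^bsub>dihedral l\<^esub> y \<in> carrier (dihedral l)"
    by (cases x; cases y) (simp add: mult_dihedral carrier_dihedral)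
next
  show "\<one>\<^bsub>dihedral l\<^esub> \<in> carrier (dihedral l)"
    by (simp add: one_dihedral carrier_dihedral zcls_def)
next
  fix x y z assume "x \<in> carrier (dihedral l)" "y \<in> carrier (dihedral l)" "z \<in> carrier (dihedral l)"
  then show "x \<otimes>\<^bsub>dihedral l\<^esub> y \<otimes>\<^bsub>dihedral l\<^esub> z = x \<otimes>\<^bsub>dihedral l\<^esub> (y \<otimes>\<^bsub>dihedral l\<^esub> z)"
  proof -
    obtain i e j f h g where "x = (i,e)" "y = (j,f)" "z = (h,g)" by (cases x; cases y; cases z)
    then show ?thesis
      apply (cases e; cases f)
      apply (simp_all add: mult_dihedral zcls_def mod_simps)
      apply (simp_all add: algebra_simps)
      done
  qed
next
  fix x assume "x \<in> carrier (dihedral l)"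
  then show "\<one>\<^bsub>dihedral l\<^esub> \<otimes>\<^bsub>dihedral l\<^esub> x = x"
    by (cases x) (simp add: one_dihedral mult_dihedral carrier_dihedral)
next
  fix x assume x: "x \<in> carrier (dihedral l)"
  obtain i e where xe: "x = (i, e)" by (cases x)
  show "\<exists>y\<in>carrier (dihedral l). y \<otimes>\<^bsub>dihedral l\<^esub> x = \<one>\<^bsub>dihedral l\<^esub>"
  proof (cases e)
    case True
    then show ?thesis using x xe
      by (intro bexI[of _ "(i, True)"]) (auto simp: mult_dihedral carrier_dihedral one_dihedral zcls_def)
  next
    case False
    then show ?thesis using x xe
    proof (intro bexI[of _ "(zcls l (- i), False)"])
      show "(zcls l (- i), False) \<otimes>\<^bsub>dihedral l\<^esub> x = \<one>\<^bsub>dihedral l\<^esub>"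
        using xe False by (simp add: mult_dihedral one_dihedral zcls_add_left)
    qed (simp add: carrier_dihedral)
  qed
qed

lemma carrier_wreath: "(g, f) \<in> carrier (wreath B L) \<longleftrightarrow> g \<in> carrier B \<and> f \<in> extensional (carrier B)
        \<and> f \<in> carrier B \<rightarrow> carrier L \<and> finite {x \<in> carrier B. f x \<noteq> \<one>\<^bsub>L\<^esub>}"
  by (simp add: wreath_def)

lemma mult_wreath: "(g, f) \<otimes>\<^bsub>wreath B L\<^esub> (h, f') = (g \<otimes>\<^bsub>B\<^esub> h,
        (\<lambda>x\<in>carrier B. f x \<otimes>\<^bsub>L\<^esub> f' (inv\<^bsub>B\<^esub> g \<otimes>\<^bsub>B\<^esub> x)))"
  by (simp add: wreath_def)

lemma one_wreath: "\<one>\<^bsub>wreath B L\<^esub> = (\<one>\<^bsub>B\<^esub>, (\<lambda>x\<in>carrier B. \<one>\<^bsub>L\<^esub>))"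
  by (simp add: wreath_def)

lemma group_wreath:
  assumes GB: "group B" and GL: "group L"
  shows "group (wreath B L)"
proof -
  interpret B: group B by (rule GB)
  interpret L: group L by (rule GL)
  show ?thesis
  proof (rule groupI)
    fix x y assume x: "x \<in> carrier (wreath B L)" and y: "y \<in> carrier (wreath B L)"
    obtain g f where xe: "x = (g, f)" by (cases x)
    obtain h f' where ye: "y = (h, f')" by (cases y)
    have g: "g \<in> carrier B" and f: "f \<in> carrier B \<rightarrow> carrier L" and fin: "finite {x \<in> carrier B. f x \<noteq> \<one>\<^bsub>L\<^esub>}"
      using x xe by (auto simp: carrier_wreath)
    have h: "h \<in> carrier B" and f': "f' \<in> carrier B \<rightarrow> carrier L" and fin': "finite {x \<in> carrier B. f' x \<noteq> \<one>\<^bsub>L\<^esub>}"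
      using y ye by (auto simp: carrier_wreath)
    let ?F = "(\<lambda>x\<in>carrier B. f x \<otimes>\<^bsub>L\<^esub> f' (inv\<^bsub>B\<^esub> g \<otimes>\<^bsub>B\<^esub> x))"
    have sub: "{x \<in> carrier B. ?F x \<noteq> \<one>\<^bsub>L\<^esub>} \<subseteq> {x \<in> carrier B. f x \<noteq> \<one>\<^bsub>L\<^esub>} \<union> (\<lambda>z. g \<otimes>\<^bsub>B\<^esub> z) ` {x \<in> carrier B. f' x \<noteq> \<one>\<^bsub>L\<^esub>}"
    proof
      fix z assume z: "z \<in> {x \<in> carrier B. ?F x \<noteq> \<one>\<^bsub>L\<^esub>}"
      show "z \<in> {x \<in> carrier B. f x \<noteq> \<one>\<^bsub>L\<^esub>} \<union> (\<lambda>z. g \<otimes>\<^bsub>B\<^esub> z) ` {x \<in> carrier B. f' x \<noteq> \<one>\<^bsub>L\<^esub>}"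
      proof (cases "f z = \<one>\<^bsub>L\<^esub>")
        case True
        have zc: "z \<in> carrier B" using z by simp
        have iz: "inv\<^bsub>B\<^esub> g \<otimes>\<^bsub>B\<^esub> z \<in> carrier B" using g zc by simp
        have "f' (inv\<^bsub>B\<^esub> g \<otimes>\<^bsub>B\<^esub> z) \<noteq> \<one>\<^bsub>L\<^esub>" using z True f' iz zc by auto
        moreover have "z = g \<otimes>\<^bsub>B\<^esub> (inv\<^bsub>B\<^esub> g \<otimes>\<^bsub>B\<^esub> z)" using g zc by (simp add: B.m_assoc[symmetric])
        ultimately show ?thesis using iz by blast
      next
        case False then show ?thesis using z by simp
      qed
    qed
    have "finite {x \<in> carrier B. ?F x \<noteq> \<one>\<^bsub>L\<^esub>}"
      by (rule finite_subset[OF sub]) (use fin fin' in simp)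
    moreover have "?F \<in> carrier B \<rightarrow> carrier L"
    proof (rule Pi_I)
      fix a assume a: "a \<in> carrier B"
      then have "inv\<^bsub>B\<^esub> g \<otimes>\<^bsub>B\<^esub> a \<in> carrier B" using g by simp
      then show "?F a \<in> carrier L" using a f f' by (simp add: Pi_iff L.m_closed)
    qed
    ultimately show "x \<otimes>\<^bsub>wreath B L\<^esub> y \<in> carrier (wreath B L)"
      using xe ye g h by (simp add: mult_wreath carrier_wreath)
  next
    show "\<one>\<^bsub>wreath B L\<^esub> \<in> carrier (wreath B L)"
      by (simp add: one_wreath carrier_wreath)
  next
    fix x y z assume x: "x \<in> carrier (wreath B L)" and y: "y \<in> carrier (wreath B L)" and z: "z \<in> carrier (wreath B L)"
    obtain g f where xe: "x = (g, f)" by (cases x)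
    obtain h f' where ye: "y = (h, f')" by (cases y)
    obtain j f'' where ze: "z = (j, f'')" by (cases z)
    have g: "g \<in> carrier B" and f: "f \<in> carrier B \<rightarrow> carrier L"
      using x xe by (auto simp: carrier_wreath)
    have h: "h \<in> carrier B" and f': "f' \<in> carrier B \<rightarrow> carrier L"
      using y ye by (auto simp: carrier_wreath)
    have j: "j \<in> carrier B" and f'': "f'' \<in> carrier B \<rightarrow> carrier L"
      using z ze by (auto simp: carrier_wreath)
    have eq: "(\<lambda>xa\<in>carrier B. (\<lambda>x\<in>carrier B. f x \<otimes>\<^bsub>L\<^esub> f' (inv\<^bsub>B\<^esub> g \<otimes>\<^bsub>B\<^esub> x)) xa \<otimes>\<^bsub>L\<^esub> f'' (inv\<^bsub>B\<^esub> (g \<otimes>\<^bsub>B\<^esub> h) \<otimes>\<^bsub>B\<^esub> xa))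
       = (\<lambda>xa\<in>carrier B. f xa \<otimes>\<^bsub>L\<^esub> (\<lambda>x\<in>carrier B. f' x \<otimes>\<^bsub>L\<^esub> f'' (inv\<^bsub>B\<^esub> h \<otimes>\<^bsub>B\<^esub> x)) (inv\<^bsub>B\<^esub> g \<otimes>\<^bsub>B\<^esub> xa))"
    proof (rule restrict_ext)
      fix a assume a: "a \<in> carrier B"
      have ia: "inv\<^bsub>B\<^esub> g \<otimes>\<^bsub>B\<^esub> a \<in> carrier B" using a g by simp
      have e: "inv\<^bsub>B\<^esub> (g \<otimes>\<^bsub>B\<^esub> h) \<otimes>\<^bsub>B\<^esub> a = inv\<^bsub>B\<^esub> h \<otimes>\<^bsub>B\<^esub> (inv\<^bsub>B\<^esub> g \<otimes>\<^bsub>B\<^esub> a)"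
        using g h a by (simp add: B.inv_mult_group B.m_assoc)
      show "(\<lambda>x\<in>carrier B. f x \<otimes>\<^bsub>L\<^esub> f' (inv\<^bsub>B\<^esub> g \<otimes>\<^bsub>B\<^esub> x)) a \<otimes>\<^bsub>L\<^esub> f'' (inv\<^bsub>B\<^esub> (g \<otimes>\<^bsub>B\<^esub> h) \<otimes>\<^bsub>B\<^esub> a)
         = f a \<otimes>\<^bsub>L\<^esub> (\<lambda>x\<in>carrier B. f' x \<otimes>\<^bsub>L\<^esub> f'' (inv\<^bsub>B\<^esub> h \<otimes>\<^bsub>B\<^esub> x)) (inv\<^bsub>B\<^esub> g \<otimes>\<^bsub>B\<^esub> a)"
        using a ia e f f' f'' h by (simp add: Pi_iff L.m_assoc)
    qed
    show "x \<otimes>\<^bsub>wreath B L\<^esub> y \<otimes>\<^bsub>wreath B L\<^esub> z = x \<otimes>\<^bsub>wreath B L\<^esub> (y \<otimes>\<^bsub>wreath B L\<^esub> z)"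
      using xe ye ze g h j eq by (simp add: mult_wreath B.m_assoc)
  next
    fix x assume x: "x \<in> carrier (wreath B L)"
    obtain g f where xe: "x = (g, f)" by (cases x)
    have g: "g \<in> carrier B" and f: "f \<in> carrier B \<rightarrow> carrier L" and fe: "f \<in> extensional (carrier B)"
      using x xe by (auto simp: carrier_wreath)
    have "(\<lambda>xa\<in>carrier B. (\<lambda>x\<in>carrier B. \<one>\<^bsub>L\<^esub>) xa \<otimes>\<^bsub>L\<^esub> f (inv\<^bsub>B\<^esub> \<one>\<^bsub>B\<^esub> \<otimes>\<^bsub>B\<^esub> xa)) = f"
      using f fe by (auto simp: extensional_def restrict_def fun_eq_iff Pi_iff)
    then show "\<one>\<^bsub>wreath B L\<^esub> \<otimes>\<^bsub>wreath B L\<^esub> x = x"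
      using xe g by (simp add: one_wreath mult_wreath)
  next
    fix x assume x: "x \<in> carrier (wreath B L)"
    obtain g f where xe: "x = (g, f)" by (cases x)
    have g: "g \<in> carrier B" and f: "f \<in> carrier B \<rightarrow> carrier L" and fin: "finite {x \<in> carrier B. f x \<noteq> \<one>\<^bsub>L\<^esub>}"
      using x xe by (auto simp: carrier_wreath)
    let ?F = "\<lambda>x\<in>carrier B. inv\<^bsub>L\<^esub> (f (g \<otimes>\<^bsub>B\<^esub> x))"
    have sub: "{x \<in> carrier B. ?F x \<noteq> \<one>\<^bsub>L\<^esub>} \<subseteq> (\<lambda>z. inv\<^bsub>B\<^esub> g \<otimes>\<^bsub>B\<^esub> z) ` {x \<in> carrier B. f x \<noteq> \<one>\<^bsub>L\<^esub>}"
    proof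
      fix z assume z: "z \<in> {x \<in> carrier B. ?F x \<noteq> \<one>\<^bsub>L\<^esub>}"
      have zc: "z \<in> carrier B" using z by simp
      have gz: "g \<otimes>\<^bsub>B\<^esub> z \<in> carrier B" using g zc by simp
      have "f (g \<otimes>\<^bsub>B\<^esub> z) \<noteq> \<one>\<^bsub>L\<^esub>" using z zc by auto
      moreover have "z = inv\<^bsub>B\<^esub> g \<otimes>\<^bsub>B\<^esub> (g \<otimes>\<^bsub>B\<^esub> z)" using g zc by (simp add: B.m_assoc[symmetric])
      ultimately show "z \<in> (\<lambda>z. inv\<^bsub>B\<^esub> g \<otimes>\<^bsub>B\<^esub> z) ` {x \<in> carrier B. f x \<noteq> \<one>\<^bsub>L\<^esub>}" using gz by blast
    qed
    have fin2: "finite {x \<in> carrier B. ?F x \<noteq> \<one>\<^bsub>L\<^esub>}"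
      by (rule finite_subset[OF sub]) (use fin in simp)
    have mem: "(inv\<^bsub>B\<^esub> g, ?F) \<in> carrier (wreath B L)"
      using fin2 f g by (auto simp: carrier_wreath)
    have "(\<lambda>xa\<in>carrier B. ?F xa \<otimes>\<^bsub>L\<^esub> f (inv\<^bsub>B\<^esub> (inv\<^bsub>B\<^esub> g) \<otimes>\<^bsub>B\<^esub> xa)) = (\<lambda>x\<in>carrier B. \<one>\<^bsub>L\<^esub>)"
      using f g by (intro restrict_ext) (auto simp: Pi_iff)
    then have "(inv\<^bsub>B\<^esub> g, ?F) \<otimes>\<^bsub>wreath B L\<^esub> x = \<one>\<^bsub>wreath B L\<^esub>"
      using xe g by (simp add: mult_wreath one_wreath)
    then show "\<exists>y\<in>carrier (wreath B L). y \<otimes>\<^bsub>wreath B L\<^esub> x = \<one>\<^bsub>wreath B L\<^esub>"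
      using mem by blast
  qed
qed

abbreviation "IM n \<equiv> integer_mod_group n"
abbreviation "W n l \<equiv> wreath (integer_mod_group n) (dihedral l)"

definition gensW :: "nat \<Rightarrow> enat \<Rightarrow> int \<Rightarrow> letter \<Rightarrow> int \<times> (int \<Rightarrow> int \<times> bool)" where
  "gensW n l c = marked3 (1 mod int n, triv_fun (IM n) (dihedral l))
     (0, delta_fun (IM n) (dihedral l) (dih_a l) 0)
     (0, delta_fun (IM n) (dihedral l) (dih_b l) (c mod int n))"

fun events :: "word3 \<Rightarrow> (int \<times> bool) list" where
  "events [] = []"
| "events ((X1, e) # w) = map (\<lambda>(y, t). (y + (if e then -1 else 1), t)) (events w)"
| "events ((X2, e) # w) = (0, False) # events w"
| "events ((X3, e) # w) = (0, True) # events w"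

fun disp :: "word3 \<Rightarrow> int" where
  "disp [] = 0"
| "disp ((X1, e) # w) = (if e then -1 else 1) + disp w"
| "disp ((X2, e) # w) = disp w"
| "disp ((X3, e) # w) = disp w"

definition dval :: "enat \<Rightarrow> bool \<Rightarrow> int \<times> bool" where
  "dval l t = (if t then dih_b l else dih_a l)"

definition site :: "nat \<Rightarrow> int \<Rightarrow> int \<times> bool \<Rightarrow> int" where
  "site n c e = (fst e + (if snd e then c else 0)) mod int n"

fun lampl :: "nat \<Rightarrow> enat \<Rightarrow> int \<Rightarrow> (int \<times> bool) list \<Rightarrow> int \<Rightarrow> int \<times> bool" where
  "lampl n l c [] x = (0, False)"
| "lampl n l c (e # E) x = (if site n c e = x then dval l (snd e) \<otimes>\<^bsub>dihedral l\<^esub> lampl n l c E x else lampl n l c E x)"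

lemma carrier_IM_iff: "x \<in> carrier (IM n) \<longleftrightarrow> x mod int n = x"
proof (cases "n = 0")
  case False
  then have p: "int n > 0" by simp
  show ?thesis
  proof
    assume "x \<in> carrier (IM n)" then show "x mod int n = x"
      using False by (simp add: carrier_integer_mod_group)
  next
    assume "x mod int n = x"
    then have "0 \<le> x \<and> x < int n" using pos_mod_sign[OF p, of x] pos_mod_bound[OF p, of x] by linarith
    then show "x \<in> carrier (IM n)" using False by (simp add: carrier_integer_mod_group)
  qed
qed (simp add: carrier_integer_mod_group)

lemma mod_in_IM[simp]: "a mod int n \<in> carrier (IM n)"
  by (simp add: carrier_IM_iff)

lemma dval_carrier[simp]: "dval l t \<in> carrier (dihedral l)"
  by (simp add: dval_def dih_a_def dih_b_def carrier_dihedral)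

lemma lampl_carrier[simp]: "lampl n l c E x \<in> carrier (dihedral l)"
proof (induction E)
  case Nil then show ?case by (simp add: carrier_dihedral)
next
  case (Cons e E)
  then show ?case by (simp add: group.is_monoid[OF group_dihedral] monoid.m_closed)
qed

lemma dihedral_l_one: "p \<in> carrier (dihedral l) \<Longrightarrow> (0, False) \<otimes>\<^bsub>dihedral l\<^esub> p = p"
  by (metis group.is_monoid group_dihedral monoid.l_one one_dihedral)

lemma mod_shift_iff: "(a + s) mod (m::int) = b mod m \<longleftrightarrow> a mod m = (b - s) mod m"
  by (simp add: mod_eq_dvd_iff algebra_simps)

lemma lampl_shift:
  assumes "x mod int n = x"
  shows "lampl n l c (map (\<lambda>(y, t). (y + s, t)) E) x = lampl n l c E ((x - s) mod int n)"
proof (induction E)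
  case (Cons e E)
  obtain y t where e: "e = (y, t)" by (cases e)
  have "((y + s) + (if t then c else 0)) mod int n = x \<longleftrightarrow> (y + (if t then c else 0)) mod int n = (x - s) mod int n"
  proof -
    have "((y + (if t then c else 0)) + s) mod int n = x mod int n \<longleftrightarrow> (y + (if t then c else 0)) mod int n = (x - s) mod int n"
      by (rule mod_shift_iff)
    moreover have "(y + s) + (if t then c else 0) = (y + (if t then c else 0)) + s" by simp
    ultimately show ?thesis using assms by metis
  qed
  then show ?case using Cons e by (simp add: site_def)
qed simp

lemma inv_tau:
  "inv\<^bsub>W n l\<^esub> (1 mod int n, triv_fun (IM n) (dihedral l)) = ((-1) mod int n, triv_fun (IM n) (dihedral l))"
proof (rule group.inv_equality[OF group_wreath[OF group_integer_mod_group group_dihedral]])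
  show "((-1) mod int n, triv_fun (IM n) (dihedral l)) \<otimes>\<^bsub>W n l\<^esub> (1 mod int n, triv_fun (IM n) (dihedral l)) = \<one>\<^bsub>W n l\<^esub>"
  proof -
    have 1: "((-1) mod int n + 1 mod int n) mod int n = 0" by (simp add: mod_add_eq)
    have 2: "(\<lambda>x\<in>carrier (IM n). triv_fun (IM n) (dihedral l) x \<otimes>\<^bsub>dihedral l\<^esub> triv_fun (IM n) (dihedral l) (inv\<^bsub>IM n\<^esub> ((-1) mod int n) \<otimes>\<^bsub>IM n\<^esub> x))
       = (\<lambda>x\<in>carrier (IM n). (0, False))"
      by (rule restrict_ext) (simp add: triv_fun_def mult_dihedral one_dihedral)
    show ?thesis using 1 2 by (simp add: mult_wreath one_wreath one_dihedral)
  qed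
  show "(1 mod int n, triv_fun (IM n) (dihedral l)) \<in> carrier (W n l)"
    by (simp add: carrier_wreath triv_fun_def one_dihedral carrier_dihedral)
  show "((-1) mod int n, triv_fun (IM n) (dihedral l)) \<in> carrier (W n l)"
    by (simp add: carrier_wreath triv_fun_def one_dihedral del: mod_in_IM) (simp add: carrier_dihedral)
qed

lemma delta_carrier:
  assumes "v \<in> carrier (dihedral l)" "g \<in> carrier (IM n)"
  shows "(0, delta_fun (IM n) (dihedral l) v g) \<in> carrier (W n l)"
proof -
  have "{x \<in> carrier (IM n). delta_fun (IM n) (dihedral l) v g x \<noteq> \<one>\<^bsub>dihedral l\<^esub>} \<subseteq> {g}"
    by (auto simp: delta_fun_def)
  then have "finite {x \<in> carrier (IM n). delta_fun (IM n) (dihedral l) v g x \<noteq> \<one>\<^bsub>dihedral l\<^esub>}"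
    using finite_subset by blast
  then show ?thesis using assms
    by (simp add: carrier_wreath delta_fun_def one_dihedral carrier_dihedral)
qed

lemma dval_sq: "dval l t \<otimes>\<^bsub>dihedral l\<^esub> dval l t = (0, False)"
  by (cases t) (simp_all add: dval_def dih_a_def dih_b_def mult_dihedral zcls_def)

lemma inv_delta:
  assumes "t' = dval l t" "g \<in> carrier (IM n)"
  shows "inv\<^bsub>W n l\<^esub> (0, delta_fun (IM n) (dihedral l) t' g) = (0, delta_fun (IM n) (dihedral l) t' g)"
proof (rule group.inv_equality[OF group_wreath[OF group_integer_mod_group group_dihedral]])
  show "(0, delta_fun (IM n) (dihedral l) t' g) \<in> carrier (W n l)"
    using assms by (intro delta_carrier) simp_all
  then show "(0, delta_fun (IM n) (dihedral l) t' g) \<in> carrier (W n l)" .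
  have "(\<lambda>x\<in>carrier (IM n). delta_fun (IM n) (dihedral l) t' g x \<otimes>\<^bsub>dihedral l\<^esub>
          delta_fun (IM n) (dihedral l) t' g (inv\<^bsub>IM n\<^esub> 0 \<otimes>\<^bsub>IM n\<^esub> x)) = (\<lambda>x\<in>carrier (IM n). (0, False))"
  proof (rule restrict_ext)
    fix x assume x: "x \<in> carrier (IM n)"
    then have "inv\<^bsub>IM n\<^esub> 0 \<otimes>\<^bsub>IM n\<^esub> x = x" by (simp add: carrier_IM_iff)
    then show "delta_fun (IM n) (dihedral l) t' g x \<otimes>\<^bsub>dihedral l\<^esub>
          delta_fun (IM n) (dihedral l) t' g (inv\<^bsub>IM n\<^esub> 0 \<otimes>\<^bsub>IM n\<^esub> x) = (0, False)"
      using x assms by (simp add: delta_fun_def dval_sq one_dihedral mult_dihedral)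
  qed
  then show "(0, delta_fun (IM n) (dihedral l) t' g) \<otimes>\<^bsub>W n l\<^esub> (0, delta_fun (IM n) (dihedral l) t' g) = \<one>\<^bsub>W n l\<^esub>"
    by (simp add: mult_wreath one_wreath one_dihedral)
qed

lemma modarith1: "((- (s mod m)) mod m + x) mod m = (x - s) mod (m::int)"
  by (simp add: mod_simps algebra_simps)

lemma step_tau:
  assumes "a = s mod int n"
  shows "(a, triv_fun (IM n) (dihedral l)) \<otimes>\<^bsub>W n l\<^esub> (P mod int n, \<lambda>x\<in>carrier (IM n). lampl n l c E x)
    = ((s + P) mod int n, \<lambda>x\<in>carrier (IM n). lampl n l c (map (\<lambda>(y, t). (y + s, t)) E) x)"
proof -
  have 1: "a \<otimes>\<^bsub>IM n\<^esub> (P mod int n) = (s + P) mod int n" using assms by (simp add: mod_add_eq)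
  have 2: "(\<lambda>x\<in>carrier (IM n). triv_fun (IM n) (dihedral l) x \<otimes>\<^bsub>dihedral l\<^esub> (\<lambda>x\<in>carrier (IM n). lampl n l c E x) (inv\<^bsub>IM n\<^esub> a \<otimes>\<^bsub>IM n\<^esub> x))
     = (\<lambda>x\<in>carrier (IM n). lampl n l c (map (\<lambda>(y, t). (y + s, t)) E) x)"
  proof (rule restrict_ext)
    fix x assume x: "x \<in> carrier (IM n)"
    have ia: "inv\<^bsub>IM n\<^esub> a = (- a) mod int n" using assms by simp
    have arg: "inv\<^bsub>IM n\<^esub> a \<otimes>\<^bsub>IM n\<^esub> x = (x - s) mod int n"
      using ia assms by (simp add: modarith1)
    have xm: "x mod int n = x" using x by (simp add: carrier_IM_iff)
    show "triv_fun (IM n) (dihedral l) x \<otimes>\<^bsub>dihedral l\<^esub> (\<lambda>x\<in>carrier (IM n). lampl n l c E x) (inv\<^bsub>IM n\<^esub> a \<otimes>\<^bsub>IM n\<^esub> x)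
      = lampl n l c (map (\<lambda>(y, t). (y + s, t)) E) x"
      using x arg by (simp add: triv_fun_def one_dihedral dihedral_l_one lampl_shift[OF xm])
  qed
  show ?thesis using 1 2 by (simp add: mult_wreath)
qed

lemma step_delta:
  assumes "g = site n c (0, t)"
  shows "(0, delta_fun (IM n) (dihedral l) (dval l t) g) \<otimes>\<^bsub>W n l\<^esub> (P mod int n, \<lambda>x\<in>carrier (IM n). lampl n l c E x)
    = (P mod int n, \<lambda>x\<in>carrier (IM n). lampl n l c ((0, t) # E) x)"
proof -
  have 1: "0 \<otimes>\<^bsub>IM n\<^esub> (P mod int n) = P mod int n" by simp
  have 2: "(\<lambda>x\<in>carrier (IM n). delta_fun (IM n) (dihedral l) (dval l t) g x \<otimes>\<^bsub>dihedral l\<^esub> (\<lambda>x\<in>carrier (IM n). lampl n l c E x) (inv\<^bsub>IM n\<^esub> 0 \<otimes>\<^bsub>IM n\<^esub> x))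
     = (\<lambda>x\<in>carrier (IM n). lampl n l c ((0, t) # E) x)"
  proof (rule restrict_ext)
    fix x assume x: "x \<in> carrier (IM n)"
    have xm: "x mod int n = x" using x by (simp add: carrier_IM_iff)
    have arg: "inv\<^bsub>IM n\<^esub> 0 \<otimes>\<^bsub>IM n\<^esub> x = x" using xm by simp
    show "delta_fun (IM n) (dihedral l) (dval l t) g x \<otimes>\<^bsub>dihedral l\<^esub> (\<lambda>x\<in>carrier (IM n). lampl n l c E x) (inv\<^bsub>IM n\<^esub> 0 \<otimes>\<^bsub>IM n\<^esub> x)
      = lampl n l c ((0, t) # E) x"
      using x arg assms by (auto simp: delta_fun_def one_dihedral dihedral_l_one)
  qed
  show ?thesis using 1 2 by (simp add: mult_wreath)
qed

lemma inv_alpha: "g \<in> carrier (IM n) \<Longrightarrow> inv\<^bsub>W n l\<^esub> (0, delta_fun (IM n) (dihedral l) (dih_a l) g) = (0, delta_fun (IM n) (dihedral l) (dih_a l) g)"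
  by (rule inv_delta[of _ l False]) (simp_all add: dval_def)
lemma inv_beta: "g \<in> carrier (IM n) \<Longrightarrow> inv\<^bsub>W n l\<^esub> (0, delta_fun (IM n) (dihedral l) (dih_b l) g) = (0, delta_fun (IM n) (dihedral l) (dih_b l) g)"
  by (rule inv_delta[of _ l True]) (simp_all add: dval_def)

lemma eval_formula:
  "eval_word (W n l) (gensW n l c) w = (disp w mod int n, \<lambda>x\<in>carrier (IM n). lampl n l c (events w) x)"
proof (induction w)
  case Nil
  then show ?case by (simp add: one_wreath one_dihedral restrict_def)
next
  case (Cons a w)
  obtain v e where a: "a = (v, e)" by (cases a)
  show ?case
  proof (cases v)
    case X1
    have g: "(if e then inv\<^bsub>W n l\<^esub> (gensW n l c X1) else gensW n l c X1)
        = ((if e then -1 else 1) mod int n, triv_fun (IM n) (dihedral l))"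
      by (simp add: gensW_def marked3_def inv_tau)
    have "eval_word (W n l) (gensW n l c) (a # w) = (if e then inv\<^bsub>W n l\<^esub> (gensW n l c X1) else gensW n l c X1) \<otimes>\<^bsub>W n l\<^esub> eval_word (W n l) (gensW n l c) w"
      by (simp only: a X1 eval_word.simps)
    also have "\<dots> = (((if e then -1 else 1) + disp w) mod int n, \<lambda>x\<in>carrier (IM n). lampl n l c (map (\<lambda>(y, t). (y + (if e then -1 else 1), t)) (events w)) x)" unfolding g Cons.IH by (rule step_tau) simp
    finally show ?thesis by (simp only: a X1 disp.simps events.simps)
  next
    case X2
    have g: "(if e then inv\<^bsub>W n l\<^esub> (gensW n l c X2) else gensW n l c X2)
        = (0, delta_fun (IM n) (dihedral l) (dval l False) (site n c (0, False)))"
      by (simp add: gensW_def marked3_def inv_alpha inv_beta dval_def site_def)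
    have "eval_word (W n l) (gensW n l c) (a # w) = (if e then inv\<^bsub>W n l\<^esub> (gensW n l c X2) else gensW n l c X2) \<otimes>\<^bsub>W n l\<^esub> eval_word (W n l) (gensW n l c) w"
      by (simp only: a X2 eval_word.simps)
    also have "\<dots> = (disp w mod int n, \<lambda>x\<in>carrier (IM n). lampl n l c ((0, False) # events w) x)" unfolding g Cons.IH by (rule step_delta) simp
    finally show ?thesis by (simp only: a X2 disp.simps events.simps)
  next
    case X3
    have g: "(if e then inv\<^bsub>W n l\<^esub> (gensW n l c X3) else gensW n l c X3)
        = (0, delta_fun (IM n) (dihedral l) (dval l True) (site n c (0, True)))"
      by (simp add: gensW_def marked3_def inv_alpha inv_beta dval_def site_def)
    have "eval_word (W n l) (gensW n l c) (a # w) = (if e then inv\<^bsub>W n l\<^esub> (gensW n l c X3) else gensW n l c X3) \<otimes>\<^bsub>W n l\<^esub> eval_word (W n l) (gensW n l c) w"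
      by (simp only: a X3 eval_word.simps)
    also have "\<dots> = (disp w mod int n, \<lambda>x\<in>carrier (IM n). lampl n l c ((0, True) # events w) x)" unfolding g Cons.IH by (rule step_delta) simp
    finally show ?thesis by (simp only: a X3 disp.simps events.simps)
  qed
qed

lemma eval_triv:
  "eval_word (W n l) (gensW n l c) w = \<one>\<^bsub>W n l\<^esub> \<longleftrightarrow>
     disp w mod int n = 0 \<and> (\<forall>x\<in>carrier (IM n). lampl n l c (events w) x = (0, False))"
  by (auto simp: eval_formula one_wreath one_dihedral restrict_def fun_eq_iff)

lemma dval_ne_one: "dval l t \<noteq> (0, False)"
  by (simp add: dval_def dih_a_def dih_b_def)

lemma dval_r_one: "dval l t \<otimes>\<^bsub>dihedral l\<^esub> (0, False) = dval l t"
  by (metis dval_carrier group.is_monoid group_dihedral monoid.r_one one_dihedral)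

lemma lampl_same_kind:
  assumes "\<forall>e\<in>set E. site n c e = x \<longrightarrow> snd e = t0"
  shows "lampl n l c E x = (if even (length (filter (\<lambda>e. site n c e = x) E)) then (0, False) else dval l t0)"
  using assms
proof (induction E)
  case Nil then show ?case by simp
next
  case (Cons e E)
  then have IH: "lampl n l c E x = (if even (length (filter (\<lambda>e. site n c e = x) E)) then (0, False) else dval l t0)"
    by simp
  show ?case
  proof (cases "site n c e = x")
    case True
    then have "snd e = t0" using Cons.prems by simp
    then show ?thesis using True IH by (simp add: dval_r_one dval_sq)
  next
    case False
    then show ?thesis using IH by simp
  qed
qed

lemma lampl_no_site:
  assumes "\<forall>e\<in>set E. site n c e \<noteq> x"
  shows "lampl n l c E x = (0, False)"
  using assms by (induction E) auto

lemma lampl_site: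
  assumes inj: "\<forall>e\<in>set E. \<forall>e'\<in>set E. site n c e = site n c e' \<longrightarrow> e = e'"
    and e0: "e0 \<in> set E"
  shows "lampl n l c E (site n c e0) = (0, False) \<longleftrightarrow> even (length (filter ((=) e0) E))"
proof -
  have fe: "filter (\<lambda>e. site n c e = site n c e0) E = filter ((=) e0) E"
    using inj e0 by (intro filter_cong) auto
  have "lampl n l c E (site n c e0) = (if even (length (filter (\<lambda>e. site n c e = site n c e0) E)) then (0, False) else dval l (snd e0))"
    using inj e0 by (intro lampl_same_kind) auto
  then show ?thesis using fe dval_ne_one by simp
qed

lemma site_carrier[simp]: "site n c e \<in> carrier (IM n)"
  by (simp add: site_def)

lemma delta_crit:
  assumes inj: "\<forall>e\<in>set E. \<forall>e'\<in>set E. site n c e = site n c e' \<longrightarrow> e = e'"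
  shows "(\<forall>x\<in>carrier (IM n). lampl n l c E x = (0, False)) \<longleftrightarrow> (\<forall>e0. even (length (filter ((=) e0) E)))"
proof
  assume H: "\<forall>x\<in>carrier (IM n). lampl n l c E x = (0, False)"
  show "\<forall>e0. even (length (filter ((=) e0) E))"
  proof
    fix e0
    show "even (length (filter ((=) e0) E))"
    proof (cases "e0 \<in> set E")
      case True
      then show ?thesis using H lampl_site[OF inj True, of l] site_carrier[of n c e0] by blast
    next
      case False
      then have "filter ((=) e0) E = []" by (auto simp: filter_empty_conv)
      then show ?thesis by simp
    qed
  qed
next
  assume H: "\<forall>e0. even (length (filter ((=) e0) E))"
  show "\<forall>x\<in>carrier (IM n). lampl n l c E x = (0, False)"
  proof
    fix x assume "x \<in> carrier (IM n)"
    show "lampl n l c E x = (0, False)"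
    proof (cases "\<exists>e0\<in>set E. site n c e0 = x")
      case True
      then obtain e0 where "e0 \<in> set E" "site n c e0 = x" by blast
      then show ?thesis using H lampl_site[OF inj] by blast
    next
      case False
      then show ?thesis by (intro lampl_no_site) auto
    qed
  qed
qed

lemma zmod_index_2[simp]: "zmod_index 2 = 2"
  by (simp add: zmod_index_def numeral_eq_enat)

lemma lampl_gamma:
  "lampl 0 2 0 E x = (int (length (filter (\<lambda>e. fst e = x \<and> snd e) E)) mod 2, odd (length (filter (\<lambda>e. fst e = x) E)))"
proof (induction E)
  case Nil then show ?case by simp
next
  case (Cons e E)
  obtain y t where e: "e = (y, t)" by (cases e)
  show ?case
  proof (cases "y = x")
    case True
    have s: "site 0 0 e = y" using e by (simp add: site_def)
    show ?thesis
    proof (cases t)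
      case True
      have "dval 2 t = (1, True)" using True by (simp add: dval_def dih_b_def zcls_def)
      then show ?thesis using Cons.IH s e True \<open>y = x\<close>
        by (simp add: mult_dihedral zcls_def) presburger
    next
      case False
      have "dval 2 t = (0, True)" using False by (simp add: dval_def dih_a_def)
      then show ?thesis using Cons.IH s e False \<open>y = x\<close>
        by (simp add: mult_dihedral zcls_def) presburger
    qed
  next
    case False
    have s: "site 0 0 e = y" using e by (simp add: site_def)
    then show ?thesis using Cons.IH e False by simp
  qed
qed

lemma len_split: "length (filter (\<lambda>e. fst e = x) E) = length (filter ((=) (x, True)) E) + length (filter ((=) (x, False)) E)"
  by (induction E) auto

lemma gamma_crit:
  "(\<forall>x. lampl 0 2 0 E x = (0, False)) \<longleftrightarrow> (\<forall>e0. even (length (filter ((=) e0) E)))"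
proof -
  have fB: "\<And>x. filter (\<lambda>e. fst e = x \<and> snd e) E = filter ((=) (x, True)) E"
    by (intro filter_cong) auto
  have "(\<forall>x. lampl 0 2 0 E x = (0, False)) \<longleftrightarrow>
     (\<forall>x. even (length (filter ((=) (x, True)) E)) \<and> even (length (filter ((=) (x, False)) E)))"
    by (auto simp: lampl_gamma fB len_split even_iff_mod_2_eq_zero[symmetric])
  also have "\<dots> \<longleftrightarrow> (\<forall>e0. even (length (filter ((=) e0) E)))"
    by (metis (full_types) surj_pair)
  finally show ?thesis .
qed

lemma disp_bound: "\<bar>disp w\<bar> \<le> int (length w)"
  by (induction w rule: disp.induct) auto

lemma cursor_bound:
  "\<forall>y\<in>insert 0 (fst ` set (events w)). \<forall>y'\<in>insert 0 (fst ` set (events w)). \<bar>y - y'\<bar> \<le> int (length w)"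
proof (induction w rule: events.induct)
  case 1 then show ?case by simp
next
  case (2 e w)
  define s :: int where "s = (if e then -1 else 1)"
  have s1: "s = 1 \<or> s = -1" by (simp add: s_def)
  have A: "fst ` set (events ((X1, e) # w)) = (\<lambda>y. y + s) ` fst ` set (events w)"
    by (simp add: image_image split_beta s_def)
  have C: "\<And>z z'. z \<in> insert 0 (fst ` set (events w)) \<Longrightarrow> z' \<in> insert 0 (fst ` set (events w)) \<Longrightarrow> \<bar>z - z'\<bar> \<le> int (length w)"
    using 2 by blast
  show ?case unfolding A
  proof (intro ballI)
    fix y y' assume y: "y \<in> insert 0 ((\<lambda>y. y + s) ` fst ` set (events w))"
      and y': "y' \<in> insert 0 ((\<lambda>y. y + s) ` fst ` set (events w))"
    obtain z where z: "z \<in> insert 0 (fst ` set (events w))" "y = 0 \<or> y = z + s"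
      using y by blast
    obtain z' where z': "z' \<in> insert 0 (fst ` set (events w))" "y' = 0 \<or> y' = z' + s"
      using y' by blast
    have 0: "(0::int) \<in> insert 0 (fst ` set (events w))" by simp
    have c1: "\<bar>z - z'\<bar> \<le> int (length w)" using C[OF z(1) z'(1)] .
    have c2: "\<bar>z - 0\<bar> \<le> int (length w)" using C[OF z(1) 0] .
    have c3: "\<bar>0 - z'\<bar> \<le> int (length w)" using C[OF 0 z'(1)] .
    have "\<bar>y - y'\<bar> \<le> int (length w) + 1"
      using z(2) z'(2) c1 c2 c3 s1 unfolding abs_le_iff by auto
    then show "\<bar>y - y'\<bar> \<le> int (length ((X1, e) # w))" by simp
  qed
next
  case (3 e w)
  have H: "\<And>z z'. z \<in> insert 0 (fst ` set (events w)) \<Longrightarrow> z' \<in> insert 0 (fst ` set (events w)) \<Longrightarrow> \<bar>z - z'\<bar> \<le> int (length w)"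
    using 3 by blast
  have eq: "insert 0 (fst ` set (events ((X2, e) # w))) = insert 0 (fst ` set (events w))" by simp
  show ?case unfolding eq
  proof (intro ballI)
    fix y y' assume "y \<in> insert 0 (fst ` set (events w))" "y' \<in> insert 0 (fst ` set (events w))"
    then have "\<bar>y - y'\<bar> \<le> int (length w)" by (rule H)
    then show "\<bar>y - y'\<bar> \<le> int (length ((X2, e) # w))" by simp
  qed
next
  case (4 e w)
  have H: "\<And>z z'. z \<in> insert 0 (fst ` set (events w)) \<Longrightarrow> z' \<in> insert 0 (fst ` set (events w)) \<Longrightarrow> \<bar>z - z'\<bar> \<le> int (length w)"
    using 4 by blast
  have eq: "insert 0 (fst ` set (events ((X3, e) # w))) = insert 0 (fst ` set (events w))" by simp
  show ?case unfolding eq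
  proof (intro ballI)
    fix y y' assume "y \<in> insert 0 (fst ` set (events w))" "y' \<in> insert 0 (fst ` set (events w))"
    then have "\<bar>y - y'\<bar> \<le> int (length w)" by (rule H)
    then show "\<bar>y - y'\<bar> \<le> int (length ((X3, e) # w))" by simp
  qed
qed

lemma cursor_bound':
  assumes "e \<in> set (events w)" "e' \<in> set (events w)"
  shows "\<bar>fst e - fst e'\<bar> \<le> int (length w)"
  using cursor_bound[of w] assms by blast

lemma site_inj:
  assumes L: "length w < k" and N: "n = 0 \<or> 2 * k < n"
    and e: "e \<in> set (events w)" and e': "e' \<in> set (events w)"
    and eq: "site n (int k) e = site n (int k) e'"
  shows "e = e'"
proof -
  obtain y t where ee: "e = (y, t)" by (cases e)
  obtain y' t' where ee': "e' = (y', t')" by (cases e')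
  have b: "\<bar>y - y'\<bar> \<le> int (length w)" using cursor_bound'[OF e e'] ee ee' by simp
  define d where "d = (y + (if t then int k else 0)) - (y' + (if t' then int k else 0))"
  have dv: "int n dvd d" using eq ee ee' by (simp add: site_def d_def mod_eq_dvd_iff)
  have small: "\<bar>d\<bar> < int n \<or> n = 0"
    using N b L by (auto simp: d_def split: if_splits)
  have dz: "d = 0"
  proof (rule ccontr)
    assume "d \<noteq> 0"
    then have "\<bar>int n\<bar> \<le> \<bar>d\<bar>" using dv dvd_imp_le_int by blast
    moreover have "n \<noteq> 0" using dv \<open>d \<noteq> 0\<close> by auto
    ultimately show False using small by simp
  qed
  have "t = t'"
  proof (rule ccontr)
    assume "t \<noteq> t'"
    then show False using dz b L by (auto simp: d_def split: if_splits)
  qed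
  then show ?thesis using dz ee ee' by (simp add: d_def)
qed

lemma delta_vs_gamma:
  assumes L: "length w < k" and N: "n = 0 \<or> 2 * k < n"
  shows "eval_word (W n l) (gensW n l (int k)) w = \<one>\<^bsub>W n l\<^esub> \<longleftrightarrow> eval_word (W 0 2) (gensW 0 2 0) w = \<one>\<^bsub>W 0 2\<^esub>"
proof -
  have inj: "\<forall>e\<in>set (events w). \<forall>e'\<in>set (events w). site n (int k) e = site n (int k) e' \<longrightarrow> e = e'"
    using site_inj[OF L N] by blast
  have db: "\<bar>disp w\<bar> \<le> int (length w)" by (rule disp_bound)
  have dm: "disp w mod int n = 0 \<longleftrightarrow> disp w = 0"
  proof (cases "n = 0")
    case False
    then have "\<bar>disp w\<bar> < int n" using db L N by linarith
    then show ?thesis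
      by (metis abs_0 dvd_imp_le_int dvd_eq_mod_eq_0 linorder_not_le of_nat_0_le_iff abs_of_nonneg mod_0)
  qed simp
  have "eval_word (W n l) (gensW n l (int k)) w = \<one>\<^bsub>W n l\<^esub> \<longleftrightarrow> disp w = 0 \<and> (\<forall>e0. even (length (filter ((=) e0) (events w))))"
    using eval_triv[of n l "int k" w] delta_crit[OF inj, of l] dm by simp
  moreover have "eval_word (W 0 2) (gensW 0 2 0) w = \<one>\<^bsub>W 0 2\<^esub> \<longleftrightarrow> disp w = 0 \<and> (\<forall>e0. even (length (filter ((=) e0) (events w))))"
    using eval_triv[of 0 2 0 w] gamma_crit[of "events w"] by (simp add: carrier_integer_mod_group)
  ultimately show ?thesis by simp
qed

lemma eval_carrier:
  assumes "group G" "\<And>v. gens v \<in> carrier G"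
  shows "eval_word G gens w \<in> carrier G"
proof (induction w)
  case Nil then show ?case using assms by (simp add: group.is_monoid monoid.one_closed)
next
  case (Cons a w)
  obtain v e where "a = (v, e)" by (cases a)
  then show ?case using Cons assms
    by (simp add: group.is_monoid monoid.m_closed group.inv_closed)
qed

lemma eval_append:
  assumes "group G" "\<And>v. gens v \<in> carrier G"
  shows "eval_word G gens (w1 @ w2) = eval_word G gens w1 \<otimes>\<^bsub>G\<^esub> eval_word G gens w2"
proof (induction w1)
  case Nil then show ?case using assms eval_carrier[OF assms] by (simp add: group.is_monoid monoid.l_one)
next
  case (Cons a w)
  obtain v e where a: "a = (v, e)" by (cases a)
  have g: "(if e then inv\<^bsub>G\<^esub> (gens v) else gens v) \<in> carrier G" using assms by (simp add: group.inv_closed)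
  show ?case using Cons a g eval_carrier[OF assms]
    by (simp add: group.is_monoid monoid.m_assoc assms(1))
qed

definition invw :: "word3 \<Rightarrow> word3" where
  "invw w = rev (map (\<lambda>(v, e). (v, \<not> e)) w)"

lemma eval_invw:
  assumes G: "group G" and gc: "\<And>v. gens v \<in> carrier G"
  shows "eval_word G gens (invw w) = inv\<^bsub>G\<^esub> (eval_word G gens w)"
proof (induction w)
  case Nil then show ?case using G by (simp add: invw_def group.is_monoid monoid.inv_one)
next
  case (Cons a w)
  interpret G: group G by (rule G)
  obtain v e where a: "a = (v, e)" by (cases a)
  have ew: "eval_word G gens w \<in> carrier G" by (rule eval_carrier[OF G gc])
  have "eval_word G gens (invw (a # w)) = eval_word G gens (invw w @ [(v, \<not> e)])"
    by (simp add: invw_def a)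
  also have "\<dots> = inv\<^bsub>G\<^esub> (eval_word G gens w) \<otimes>\<^bsub>G\<^esub> (if e then gens v else inv\<^bsub>G\<^esub> (gens v))"
    using eval_append[OF G gc] Cons gc by simp
  also have "\<dots> = inv\<^bsub>G\<^esub> ((if e then inv\<^bsub>G\<^esub> (gens v) else gens v) \<otimes>\<^bsub>G\<^esub> eval_word G gens w)"
    using ew gc by (simp add: G.inv_mult_group)
  also have "\<dots> = inv\<^bsub>G\<^esub> (eval_word G gens (a # w))" by (simp add: a)
  finally show ?case .
qed

lemma eval_single: "group G \<Longrightarrow> gens v \<in> carrier G \<Longrightarrow> eval_word G gens [(v, False)] = gens v"
  by (simp add: group.is_monoid monoid.r_one)

lemma eval_product:
  assumes G: "\<And>i. i \<in> I \<Longrightarrow> group (Gs i)" and gc: "\<And>v. gens v \<in> carrier (product_group I Gs)"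
  shows "eval_word (product_group I Gs) gens w = (\<lambda>i\<in>I. eval_word (Gs i) (\<lambda>v. gens v i) w)"
proof (induction w)
  case Nil then show ?case by simp
next
  case (Cons a w)
  obtain v e where a: "a = (v, e)" by (cases a)
  have gi: "(if e then inv\<^bsub>product_group I Gs\<^esub> (gens v) else gens v) = (\<lambda>i\<in>I. if e then inv\<^bsub>Gs i\<^esub> (gens v i) else gens v i)"
    using gc[of v] G by (auto simp: inv_product_group PiE_iff extensional_def restrict_def fun_eq_iff)
  show ?case unfolding a eval_word.simps gi Cons.IH by (simp add: restrict_def fun_eq_iff)
qed

lemma eval_subgroup_generated:
  assumes G: "group G" and gc: "\<And>v. gens v \<in> carrier G \<inter> S"
  shows "eval_word (subgroup_generated G S) gens w = eval_word G gens w"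
proof (induction w)
  case Nil then show ?case by simp
next
  case (Cons a w)
  obtain v e where a: "a = (v, e)" by (cases a)
  have "gens v \<in> carrier (subgroup_generated G S)"
    using gc[of v] by (simp add: carrier_subgroup_generated generate.incl)
  then have "inv\<^bsub>subgroup_generated G S\<^esub> (gens v) = inv\<^bsub>G\<^esub> (gens v)"
    using group.inv_subgroup_generated[OF G] by blast
  then show ?case using Cons a by simp
qed

lemma generate_eval:
  assumes G: "group G" and gc: "\<And>v. gens v \<in> carrier G"
  shows "x \<in> generate G (carrier G \<inter> range gens) \<Longrightarrow> \<exists>w. eval_word G gens w = x"
proof (induction x rule: generate.induct)
  case one then show ?case by (intro exI[of _ "[]"]) simp
next
  case (incl h)
  then obtain v where v: "h = gens v" "gens v \<in> carrier G" by auto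
  then show ?case using eval_single[of G gens v, OF G v(2)] by blast
next
  case (inv h)
  then obtain v where v: "h = gens v" "gens v \<in> carrier G" by auto
  then have "eval_word G gens [(v, True)] = inv\<^bsub>G\<^esub> h"
    using G by (simp add: group.is_monoid monoid.r_one group.inv_closed)
  then show ?case by blast
next
  case (eng h1 h2)
  then obtain w1 w2 where "eval_word G gens w1 = h1" "eval_word G gens w2 = h2" by blast
  moreover have "eval_word G gens (w1 @ w2) = eval_word G gens w1 \<otimes>\<^bsub>G\<^esub> eval_word G gens w2"
    by (rule eval_append[OF G gc])
  ultimately show ?case by metis
qed

lemma group_W[simp]: "group (W n l)"
  by (rule group_wreath[OF group_integer_mod_group group_dihedral])

lemma tau_carrier: "(1 mod int n, triv_fun (IM n) (dihedral l)) \<in> carrier (W n l)"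
  by (simp add: carrier_wreath triv_fun_def one_dihedral carrier_dihedral)

lemma gensW_carrier[simp]: "gensW n l c v \<in> carrier (W n l)"
  by (cases v) (simp_all add: gensW_def marked3_def tau_carrier delta_carrier dih_a_def dih_b_def carrier_dihedral)

lemma carrier_IM0[simp]: "carrier (IM 0) = UNIV"
  by (simp add: carrier_integer_mod_group)

lemma events_tw: "events (replicate j (X1, e) @ w) = map (\<lambda>(y, t). (y + (if e then - int j else int j), t)) (events w)"
proof (induction j)
  case 0 then show ?case by (simp add: split_beta)
next
  case (Suc j)
  then show ?case by (auto simp: split_beta algebra_simps)
qed

lemma disp_tw: "disp (replicate j (X1, e) @ w) = (if e then - int j else int j) + disp w"
  by (induction j) auto

lemma events_code: "set cw \<subseteq> {(X2, False), (X3, False)} \<Longrightarrow> events (cw @ w) = events cw @ events w"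
proof (induction cw)
  case (Cons a cw) then show ?case by auto
qed simp

lemma disp_code: "set cw \<subseteq> {(X2, False), (X3, False)} \<Longrightarrow> disp (cw @ w) = disp w"
proof (induction cw)
  case (Cons a cw) then show ?case by auto
qed simp

lemma conj_word:
  assumes "set cw \<subseteq> {(X2, False), (X3, False)}"
  shows "eval_word (W 0 2) (gensW 0 2 0) (replicate j (X1, e) @ cw @ replicate j (X1, \<not> e))
    = (0, \<lambda>y\<in>UNIV. lampl 0 2 0 (map (\<lambda>(y, t). (y + (if e then - int j else int j), t)) (events cw)) y)"
proof -
  have ev: "events (replicate j (X1, e) @ cw @ replicate j (X1, \<not> e)) = map (\<lambda>(y, t). (y + (if e then - int j else int j), t)) (events cw)"
    using events_tw[of j e "cw @ replicate j (X1, \<not> e)"] events_code[OF assms, of "replicate j (X1, \<not> e)"]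
      events_tw[of j "\<not> e" "[]"] by simp
  have di: "disp (replicate j (X1, e) @ cw @ replicate j (X1, \<not> e)) = 0"
    using disp_tw[of j e "cw @ replicate j (X1, \<not> e)"] disp_code[OF assms, of "replicate j (X1, \<not> e)"]
      disp_tw[of j "\<not> e" "[]"] by simp
  show ?thesis using eval_formula[of 0 2 0] ev di by simp
qed

lemma carrier_D2: "c \<in> carrier (dihedral 2) \<Longrightarrow> c \<in> {(0, False), (0, True), (1, True), (1, False)}"
proof -
  assume "c \<in> carrier (dihedral 2)"
  then obtain i b where c: "c = (i, b)" "i mod 2 = i" by (auto simp: carrier_dihedral zcls_def)
  then have "0 \<le> i \<and> i < 2" using pos_mod_sign[of 2 i] pos_mod_bound[of 2 i] by linarith
  then have "i = 0 \<or> i = 1" by linarith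
  then show ?thesis using c by auto
qed

lemma gamma_delta:
  assumes c: "c \<in> carrier (dihedral 2)"
  shows "\<exists>w. eval_word (W 0 2) (gensW 0 2 0) w = (0, \<lambda>y\<in>UNIV. if y = x then c else (0, False))"
proof -
  have "x = (if x < 0 then - int (nat \<bar>x\<bar>) else int (nat \<bar>x\<bar>))" by simp
  then obtain j e where x: "x = (if e then - int j else int j)" by blast
  define sh where "sh = (\<lambda>(y::int, t::bool). (y + (if e then - int j else int j), t))"
  have key: "\<And>cw. set cw \<subseteq> {(X2, False), (X3, False)} \<Longrightarrow>
      eval_word (W 0 2) (gensW 0 2 0) (replicate j (X1, e) @ cw @ replicate j (X1, \<not> e))
      = (0, \<lambda>y\<in>UNIV. lampl 0 2 0 (map sh (events cw)) y)"
    using conj_word unfolding sh_def by blast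
  have shx: "\<And>t. sh (0, t) = (x, t)" using x by (simp add: sh_def)
  consider "c = (0, False)" | "c = (0, True)" | "c = (1, True)" | "c = (1, False)" using carrier_D2[OF c] by blast
  then show ?thesis
  proof cases
    case 1
    then show ?thesis by (intro exI[of _ "[]"]) (simp add: one_wreath one_dihedral fun_eq_iff)
  next
    case 2
    have "eval_word (W 0 2) (gensW 0 2 0) (replicate j (X1, e) @ [(X2, False)] @ replicate j (X1, \<not> e))
       = (0, \<lambda>y\<in>UNIV. if y = x then c else (0, False))"
      using key[of "[(X2, False)]"] shx 2 by (simp add: site_def dval_def dih_a_def dih_b_def mult_dihedral zcls_def fun_eq_iff)
    then show ?thesis by blast
  next
    case 3
    have "eval_word (W 0 2) (gensW 0 2 0) (replicate j (X1, e) @ [(X3, False)] @ replicate j (X1, \<not> e))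
       = (0, \<lambda>y\<in>UNIV. if y = x then c else (0, False))"
      using key[of "[(X3, False)]"] shx 3 by (simp add: site_def dval_def dih_a_def dih_b_def mult_dihedral zcls_def fun_eq_iff)
    then show ?thesis by blast
  next
    case 4
    have "eval_word (W 0 2) (gensW 0 2 0) (replicate j (X1, e) @ [(X2, False), (X3, False)] @ replicate j (X1, \<not> e))
       = (0, \<lambda>y\<in>UNIV. if y = x then c else (0, False))"
      using key[of "[(X2, False), (X3, False)]"] shx 4 by (simp add: site_def dval_def dih_a_def dih_b_def mult_dihedral zcls_def fun_eq_iff)
    then show ?thesis by blast
  qed
qed

abbreviation "evG w \<equiv> eval_word (W 0 2) (gensW 0 2 0) w"

lemma reach_mult: "\<exists>w. evG w = a \<Longrightarrow> \<exists>w. evG w = b \<Longrightarrow> \<exists>w. evG w = a \<otimes>\<^bsub>W 0 2\<^esub> b"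
proof -
  assume "\<exists>w. evG w = a" "\<exists>w. evG w = b"
  then obtain w1 w2 where "evG w1 = a" "evG w2 = b" by blast
  moreover have "evG (w1 @ w2) = evG w1 \<otimes>\<^bsub>W 0 2\<^esub> evG w2"
    by (rule eval_append[OF group_W gensW_carrier])
  ultimately show ?thesis by metis
qed

lemma reach_shift: "\<exists>w. evG w = (g, \<lambda>y\<in>UNIV. (0, False))"
proof -
  have "g = (if g < 0 then - int (nat \<bar>g\<bar>) else int (nat \<bar>g\<bar>))" by simp
  then obtain j e where g: "g = (if e then - int j else int j)" by blast
  have "events (replicate j (X1, e)) = []" using events_tw[of j e "[]"] by simp
  moreover have "disp (replicate j (X1, e)) = g" using disp_tw[of j e "[]"] g by simp
  ultimately have "evG (replicate j (X1, e)) = (g, \<lambda>y\<in>UNIV. (0, False))"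
    using eval_formula[of 0 2 0 "replicate j (X1, e)"] by simp
  then show ?thesis by blast
qed

lemma reach_fun:
  assumes "finite S"
  shows "\<forall>f. (\<forall>y. f y \<in> carrier (dihedral 2)) \<and> {y. f y \<noteq> (0, False)} = S \<longrightarrow> (\<exists>w. evG w = (0, f))"
  using assms
proof (induction S rule: finite_induct)
  case empty
  show ?case
  proof (intro allI impI)
    fix f :: "int \<Rightarrow> int \<times> bool" assume "(\<forall>y. f y \<in> carrier (dihedral 2)) \<and> {y. f y \<noteq> (0, False)} = {}"
    then have "f = (\<lambda>y\<in>UNIV. (0, False))" by (auto simp: fun_eq_iff)
    then have "evG [] = (0, f)" by (simp add: one_wreath one_dihedral)
    then show "\<exists>w. evG w = (0, f)" by blast
  qed
next
  case (insert x S)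
  show ?case
  proof (intro allI impI)
    fix f :: "int \<Rightarrow> int \<times> bool" assume H: "(\<forall>y. f y \<in> carrier (dihedral 2)) \<and> {y. f y \<noteq> (0, False)} = insert x S"
    define f' where "f' = f(x := (0, False))"
    have "{y. f' y \<noteq> (0, False)} = S" using H insert.hyps(2) by (auto simp: f'_def)
    moreover have "\<forall>y. f' y \<in> carrier (dihedral 2)" using H by (simp add: f'_def carrier_dihedral)
    ultimately have r1: "\<exists>w. evG w = (0, f')" using insert.IH by blast
    have r2: "\<exists>w. evG w = (0, \<lambda>y\<in>UNIV. if y = x then f x else (0, False))"
      using gamma_delta H by blast
    have "(0, f') \<otimes>\<^bsub>W 0 2\<^esub> (0, \<lambda>y\<in>UNIV. if y = x then f x else (0, False)) = (0, f)"
    proof -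
      have "\<And>y. f' y \<otimes>\<^bsub>dihedral 2\<^esub> (if y = x then f x else (0, False)) = f y"
      proof -
        fix y
        show "f' y \<otimes>\<^bsub>dihedral 2\<^esub> (if y = x then f x else (0, False)) = f y"
        proof (cases "y = x")
          case True then show ?thesis using H by (simp add: f'_def dihedral_l_one)
        next
          case False
          have "f y \<in> carrier (dihedral 2)" using H by blast
          then have "f y \<otimes>\<^bsub>dihedral 2\<^esub> \<one>\<^bsub>dihedral 2\<^esub> = f y"
            by (simp add: group.is_monoid[OF group_dihedral] monoid.r_one)
          then show ?thesis using False by (simp add: f'_def one_dihedral)
        qed
      qed
      then show ?thesis by (simp add: mult_wreath fun_eq_iff)
    qed
    then show "\<exists>w. evG w = (0, f)" using reach_mult[OF r1 r2] by simp
  qed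
qed

lemma gamma_gen:
  assumes z: "z \<in> carrier (W 0 2)"
  shows "\<exists>w. evG w = z"
proof -
  obtain g f where zz: "z = (g, f)" by (cases z)
  have f: "\<forall>y. f y \<in> carrier (dihedral 2)" and fin: "finite {y. f y \<noteq> (0, False)}"
    using z zz by (auto simp: carrier_wreath one_dihedral)
  have r1: "\<exists>w. evG w = (0, f)" using reach_fun[OF fin] f by blast
  have r2: "\<exists>w. evG w = (g, \<lambda>y\<in>UNIV. (0, False))" by (rule reach_shift)
  have "(0, f) \<otimes>\<^bsub>W 0 2\<^esub> (g, \<lambda>y\<in>UNIV. (0, False)) = (g, f)"
  proof -
    have "\<And>y. f y \<otimes>\<^bsub>dihedral 2\<^esub> (0, False) = f y"
      using f by (metis group.is_monoid group_dihedral monoid.r_one one_dihedral)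
    then show ?thesis by (simp add: mult_wreath fun_eq_iff)
  qed
  then show ?thesis using reach_mult[OF r1 r2] zz by simp
qed

lemma Gamma_eq: "Gamma_0_2_inf = W 0 2"
  by (simp add: Gamma_0_2_inf_def Zmod_def zmod_index_def)

lemma Gamma_gens_eq: "Gamma_gens = gensW 0 2 0"
  by (simp add: Gamma_gens_def gensW_def Zmod_def zmod_index_def)

lemma Prod_eq: "Prod_group l m = product_group {1..} (\<lambda>s. W (zmod_index (m s)) (l s))"
  by (simp add: Prod_group_def Zmod_def)

lemma Delta_gens_eq: "Delta_gens k l m v = (\<lambda>s\<in>{1..}. gensW (zmod_index (m s)) (l s) (int (k s)) v)"
  by (cases v) (simp_all add: Delta_gens_def marked3_def Delta_tau_def Delta_alpha_def Delta_beta_def gensW_def Zmod_def zcls_def)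

lemma group_Prod: "group (Prod_group l m)"
  unfolding Prod_eq by (rule product_group) simp

lemma Delta_gens_carrier: "Delta_gens k l m v \<in> carrier (Prod_group l m)"
  unfolding Prod_eq Delta_gens_eq by simp

lemma Delta_eval:
  "eval_word (Delta k l m) (Delta_gens k l m) w =
     (\<lambda>s\<in>{1..}. eval_word (W (zmod_index (m s)) (l s)) (gensW (zmod_index (m s)) (l s) (int (k s))) w)"
proof -
  have "eval_word (Delta k l m) (Delta_gens k l m) w = eval_word (Prod_group l m) (Delta_gens k l m) w"
    unfolding Delta_def by (rule eval_subgroup_generated[OF group_Prod]) (simp add: Delta_gens_carrier)
  also have "\<dots> = (\<lambda>s\<in>{1..}. eval_word (W (zmod_index (m s)) (l s)) (\<lambda>v. Delta_gens k l m v s) w)"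
    unfolding Prod_eq
    apply (rule eval_product)
     apply simp
    by (rule Delta_gens_carrier[unfolded Prod_eq])
  also have "\<dots> = (\<lambda>s\<in>{1..}. eval_word (W (zmod_index (m s)) (l s)) (gensW (zmod_index (m s)) (l s) (int (k s))) w)"
    by (rule restrict_ext) (simp add: Delta_gens_eq)
  finally show ?thesis .
qed

lemma Delta_one: "\<one>\<^bsub>Delta k l m\<^esub> = (\<lambda>s\<in>{1..}. \<one>\<^bsub>W (zmod_index (m s)) (l s)\<^esub>)"
  by (simp add: Delta_def Prod_eq)

lemma Delta_triv_iff:
  "eval_word (Delta k l m) (Delta_gens k l m) w = \<one>\<^bsub>Delta k l m\<^esub> \<longleftrightarrow>
   (\<forall>s\<ge>1. eval_word (W (zmod_index (m s)) (l s)) (gensW (zmod_index (m s)) (l s) (int (k s))) w = \<one>\<^bsub>W (zmod_index (m s)) (l s)\<^esub>)"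
  unfolding Delta_eval Delta_one by (auto simp: restrict_def fun_eq_iff)

lemma N_cond:
  assumes "enat (2 * k) < m"
  shows "zmod_index m = 0 \<or> 2 * k < zmod_index m"
  using assms by (cases m) (simp_all add: zmod_index_def)

lemma group_Delta: "group (Delta k l m)"
  unfolding Delta_def by (rule group.group_subgroup_generated[OF group_Prod])

lemma Delta_gens_in: "Delta_gens k l m v \<in> carrier (Delta k l m)"
  unfolding Delta_def carrier_subgroup_generated
  by (rule generate.incl) (simp add: Delta_gens_carrier)

lemma Delta_reach: "x \<in> carrier (Delta k l m) \<Longrightarrow> \<exists>w. eval_word (Delta k l m) (Delta_gens k l m) w = x"
proof -
  assume x: "x \<in> carrier (Delta k l m)"
  then have "x \<in> generate (Prod_group l m) (carrier (Prod_group l m) \<inter> range (Delta_gens k l m))"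
    by (simp add: Delta_def carrier_subgroup_generated)
  then obtain w where "eval_word (Prod_group l m) (Delta_gens k l m) w = x"
    using generate_eval[of "Prod_group l m" "Delta_gens k l m", OF group_Prod Delta_gens_carrier] by blast
  moreover have "eval_word (Delta k l m) (Delta_gens k l m) w = eval_word (Prod_group l m) (Delta_gens k l m) w"
    unfolding Delta_def by (rule eval_subgroup_generated[OF group_Prod]) (simp add: Delta_gens_carrier)
  ultimately show ?thesis by metis
qed

lemma group_eq_from_inv:
  assumes "group G" "a \<in> carrier G" "b \<in> carrier G" "a \<otimes>\<^bsub>G\<^esub> inv\<^bsub>G\<^esub> b = \<one>\<^bsub>G\<^esub>"
  shows "a = b"
proof -
  interpret G: group G by fact
  have "a = a \<otimes>\<^bsub>G\<^esub> (inv\<^bsub>G\<^esub> b \<otimes>\<^bsub>G\<^esub> b)" using assms by simp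
  also have "\<dots> = (a \<otimes>\<^bsub>G\<^esub> inv\<^bsub>G\<^esub> b) \<otimes>\<^bsub>G\<^esub> b" using assms(2,3) by (simp add: G.m_assoc)
  also have "\<dots> = b" using assms by simp
  finally show ?thesis .
qed

theorem lemma2p3:
  fixes k :: "nat \<Rightarrow> nat" and l m :: "nat \<Rightarrow> enat"
  assumes "\<forall>s\<ge>1. l s \<ge> 2"
    and "\<forall>s\<ge>1. m s \<ge> 1"
    and "\<forall>s\<ge>1. enat (2 * k s) < m s"
  shows "(\<forall>R::real. R < (real (INF s\<in>{1..}. k s) - 1) / 2 \<longrightarrow>
            balls_coincide R (Delta k l m) (Delta_gens k l m) Gamma_0_2_inf Gamma_gens)
       \<and> (\<not> bdd_above (k ` {1..}) \<longrightarrow>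
            marked_quotient Gamma_0_2_inf Gamma_gens (Delta k l m) (Delta_gens k l m))"
proof
  have comp: "eval_word (W (zmod_index (m s)) (l s)) (gensW (zmod_index (m s)) (l s) (int (k s))) w = \<one>\<^bsub>W (zmod_index (m s)) (l s)\<^esub>
      \<longleftrightarrow> evG w = \<one>\<^bsub>W 0 2\<^esub>" if "s \<ge> 1" "length w < k s" for s w
  proof -
    have "enat (2 * k s) < m s" using assms(3) that(1) by simp
    then have N: "zmod_index (m s) = 0 \<or> 2 * k s < zmod_index (m s)" by (rule N_cond)
    show ?thesis by (rule delta_vs_gamma[OF that(2) N])
  qed
  show "\<forall>R::real. R < (real (INF s\<in>{1..}. k s) - 1) / 2 \<longrightarrow>
            balls_coincide R (Delta k l m) (Delta_gens k l m) Gamma_0_2_inf Gamma_gens"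
  proof (intro allI impI)
    fix R :: real assume R: "R < (real (INF s\<in>{1..}. k s) - 1) / 2"
    show "balls_coincide R (Delta k l m) (Delta_gens k l m) Gamma_0_2_inf Gamma_gens"
      unfolding balls_coincide_def Gamma_eq Gamma_gens_eq
    proof (intro allI impI)
      fix w :: word3 assume w: "real (length w) \<le> 2 * R"
      have lw: "length w < k s" if "s \<ge> 1" for s
      proof -
        have "(INF s\<in>{1..}. k s) \<le> k s" using that by (intro cINF_lower) (simp_all add: bdd_below_bot)
        then have A: "real (INF s\<in>{1..}. k s) \<le> real (k s)" by simp
        have B: "2 * R < real (INF s\<in>{1..}. k s) - 1" using R by (simp add: field_simps)
        have "real (length w) < real (k s)" using w A B by linarith
        then show ?thesis by simp
      qed
      have C: "eval_word (W (zmod_index (m s)) (l s)) (gensW (zmod_index (m s)) (l s) (int (k s))) w = \<one>\<^bsub>W (zmod_index (m s)) (l s)\<^esub> \<longleftrightarrow> evG w = \<one>\<^bsub>W 0 2\<^esub>"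
        if "1 \<le> s" for s using comp[OF that lw[OF that]] .
      have "eval_word (Delta k l m) (Delta_gens k l m) w = \<one>\<^bsub>Delta k l m\<^esub> \<longleftrightarrow> (\<forall>s\<ge>(1::nat). evG w = \<one>\<^bsub>W 0 2\<^esub>)"
        unfolding Delta_triv_iff using C by simp
      also have "\<dots> \<longleftrightarrow> evG w = \<one>\<^bsub>W 0 2\<^esub>" by auto
      finally show "eval_word (Delta k l m) (Delta_gens k l m) w = \<one>\<^bsub>Delta k l m\<^esub> \<longleftrightarrow> evG w = \<one>\<^bsub>W 0 2\<^esub>" .
    qed
  qed
  show "\<not> bdd_above (k ` {1..}) \<longrightarrow> marked_quotient Gamma_0_2_inf Gamma_gens (Delta k l m) (Delta_gens k l m)"
  proof
    assume nb: "\<not> bdd_above (k ` {1..})"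
    have big: "\<exists>s\<ge>1. N < k s" for N
    proof (rule ccontr)
      assume "\<not> (\<exists>s\<ge>1. N < k s)"
      then have "\<And>x. x \<in> k ` {1..} \<Longrightarrow> x \<le> N" by (auto simp: not_less)
      then have "bdd_above (k ` {1..})" by (rule bdd_aboveI)
      then show False using nb by blast
    qed
    let ?D = "Delta k l m" and ?gD = "Delta_gens k l m"
    let ?eD = "eval_word ?D ?gD"
    have GD: "group ?D" by (rule group_Delta)
    have gDc: "\<And>v. ?gD v \<in> carrier ?D" by (rule Delta_gens_in)
    have triv: "evG w = \<one>\<^bsub>W 0 2\<^esub>" if "?eD w = \<one>\<^bsub>?D\<^esub>" for w
    proof -
      obtain s where s: "s \<ge> 1" "length w < k s" using big by blast
      have "eval_word (W (zmod_index (m s)) (l s)) (gensW (zmod_index (m s)) (l s) (int (k s))) w = \<one>\<^bsub>W (zmod_index (m s)) (l s)\<^esub>"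
        using that s(1) unfolding Delta_triv_iff by blast
      then show ?thesis using comp[OF s] by simp
    qed
    have wd: "evG w1 = evG w2" if "?eD w1 = ?eD w2" for w1 w2
    proof -
      have "?eD (w1 @ invw w2) = ?eD w1 \<otimes>\<^bsub>?D\<^esub> inv\<^bsub>?D\<^esub> (?eD w2)"
        using eval_append[OF GD gDc] eval_invw[OF GD gDc] by simp
      also have "\<dots> = \<one>\<^bsub>?D\<^esub>" using that eval_carrier[OF GD gDc] GD by (simp add: group.r_inv)
      finally have "evG (w1 @ invw w2) = \<one>\<^bsub>W 0 2\<^esub>" by (rule triv)
      then have "evG w1 \<otimes>\<^bsub>W 0 2\<^esub> inv\<^bsub>W 0 2\<^esub> (evG w2) = \<one>\<^bsub>W 0 2\<^esub>"
        using eval_append[OF group_W gensW_carrier] eval_invw[OF group_W gensW_carrier] by simp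
      then show ?thesis
        by (rule group_eq_from_inv[OF group_W eval_carrier[OF group_W gensW_carrier] eval_carrier[OF group_W gensW_carrier]])
    qed
    define h where "h x = evG (SOME w. ?eD w = x)" for x
    have hw: "h (?eD w) = evG w" for w
    proof -
      have "?eD (SOME w'. ?eD w' = ?eD w) = ?eD w" by (rule someI[of "\<lambda>w'. ?eD w' = ?eD w" w]) simp
      then show ?thesis unfolding h_def by (rule wd)
    qed
    have hom: "h \<in> hom ?D (W 0 2)"
    proof (rule homI)
      fix x assume "x \<in> carrier ?D"
      then obtain w where "?eD w = x" using Delta_reach by blast
      then have "h x = evG w" using hw[of w] by simp
      then show "h x \<in> carrier (W 0 2)" using eval_carrier[OF group_W gensW_carrier] by simp
    next
      fix x y assume xy: "x \<in> carrier ?D" "y \<in> carrier ?D"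
      obtain w1 where w1: "?eD w1 = x" using Delta_reach xy(1) by blast
      obtain w2 where w2: "?eD w2 = y" using Delta_reach xy(2) by blast
      note w = w1 w2
      have "h (x \<otimes>\<^bsub>?D\<^esub> y) = h (?eD (w1 @ w2))" using w eval_append[OF GD gDc] by simp
      also have "\<dots> = evG (w1 @ w2)" by (rule hw)
      also have "\<dots> = evG w1 \<otimes>\<^bsub>W 0 2\<^esub> evG w2" by (rule eval_append[OF group_W gensW_carrier])
      also have "\<dots> = h x \<otimes>\<^bsub>W 0 2\<^esub> h y" using w hw[of w1] hw[of w2] by simp
      finally show "h (x \<otimes>\<^bsub>?D\<^esub> y) = h x \<otimes>\<^bsub>W 0 2\<^esub> h y" .
    qed
    have gens: "h (?gD v) = gensW 0 2 0 v" for v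
    proof -
      have "h (?gD v) = h (?eD [(v, False)])" using eval_single[of ?D ?gD v, OF GD gDc] by simp
      also have "\<dots> = evG [(v, False)]" by (rule hw)
      also have "\<dots> = gensW 0 2 0 v" by (rule eval_single[OF group_W gensW_carrier])
      finally show ?thesis .
    qed
    have surj: "h ` carrier ?D = carrier (W 0 2)"
    proof
      show "h ` carrier ?D \<subseteq> carrier (W 0 2)" using hom by (auto simp: hom_def)
      show "carrier (W 0 2) \<subseteq> h ` carrier ?D"
      proof
        fix z assume "z \<in> carrier (W 0 2)"
        then obtain w where "evG w = z" using gamma_gen by blast
        then have "z = h (?eD w)" using hw by simp
        moreover have "?eD w \<in> carrier ?D" by (rule eval_carrier[OF GD gDc])
        ultimately show "z \<in> h ` carrier ?D" by blast
      qed
    qed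
    show "marked_quotient Gamma_0_2_inf Gamma_gens ?D ?gD"
      unfolding marked_quotient_def Gamma_eq Gamma_gens_eq using hom gens surj by blast
  qed
qed

end
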